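(* Let $d\ge1$, $p\ge1$, $\sigma>0$, $\alpha>0$, let $F$, $U$, $\Phi$ be as in the context (satisfying the standing assumption there), and let $m_0\in\mathcal P_p(\mathbb R^d)$ be absolutely continuous with density $m_0(\cdot)$. Let $(m_t)_{t\ge0}$ be a solution in $C([0,+\infty);\mathcal W_p)$ of the entropic fictitious play $\frac{dm_t}{dt}=\alpha(\hat m_t-m_t)$ with initial value $m_0$, and let $m_t(\cdot)$ be its density given by $m_t(x)=\int_0^t\alpha e^{-\alpha(t-s)}\hat m_s(x)\,ds+e^{-\alpha t}m_0(x)$. Then there exist constants $c,C>0$, depending only on $F$ and $U$, such that for every $t\ge0$ and every $x\in\mathbb R^d$, \[ m_t(x)\ge(1-e^{-\alpha t})\,c\,e^{-U(x)},\qquad m_t(x)\le(1-e^{-\alpha t})\,C\,e^{-U(x)}+e^{-\alpha t}m_0(x). \]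
   Context: $\mathcal P(\mathbb R^d)$ denotes the Borel probability measures on $\mathbb R^d$, $\mathcal P_p(\mathbb R^d)$ those with finite $p$-th moment, $\mathcal W_p$ the $p$-Wasserstein distance (also the metric space $(\mathcal P_p(\mathbb R^d),\mathcal W_p)$). Standing assumption: (a) $F:\mathcal P(\mathbb R^d)\to\mathbb R$ is non-negative and there is a continuous function $\frac{\delta F}{\delta m}:\mathcal P(\mathbb R^d)\times\mathbb R^d\to\mathbb R$ such that for all $m_0,m_1$, $F(m_1)-F(m_0)=\int_0^1\int\frac{\delta F}{\delta m}(m_\lambda,x)\,(m_1-m_0)(dx)\,d\lambda$ with $m_\lambda=(1-\lambda)m_0+\lambda m_1$; and there are $L_F,M_F>0$ with $|\frac{\delta F}{\delta m}(m,x)-\frac{\delta F}{\delta m}(m',x')|\le L_F(\mathcal W_p(m,m')+|x-x'|)$ and $|\frac{\delta F}{\delta m}(m,x)|\le M_F$ for all $m,m',x,x'$. (b) $U:\mathbb R^d\to\mathbb R$ is measurable, $\int e^{-U}dx=1$, $\operatorname{ess\,inf}U>-\infty$, $\liminf_{|x|\to\infty}U(x)/|x|^p>0$. For $m\in\mathcal P_p(\mathbb R^d)$, $\hat m=\Phi(m)$ is the probability measure with density $\hat m(x)\propto\exp(-\frac{2}{\sigma^2}\frac{\delta F}{\delta m}(m,x)-U(x))$ (the unique minimizer of $\mu\mapsto\int\frac{\delta F}{\delta m}(m,x)\mu(dx)+\frac{\sigma^2}{2}H(\mu|g)$, $g$ having density $e^{-U}$). $\hat m_t:=\Phi(m_t)$.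 The equation is understood in the sense of distributions. *)

theory Defs
  imports "HOL-Probability.Probability"
begin

definition prob_measures :: "('a::euclidean_space) measure set" where
  "prob_measures = {m. prob_space m \<and> sets m = sets borel}"

definition p_moment_measures :: "real \<Rightarrow> ('a::euclidean_space) measure set" where
  "p_moment_measures p =
     {m \<in> prob_measures. (\<integral>\<^sup>+ x. ennreal (norm x powr p) \<partial>m) < \<infinity>}"

text \<open>Couplings and the p-Wasserstein distance (extended-valued, so that it is
  meaningful for all pairs of Borel probability measures).\<close>

definition couplings :: "('a::euclidean_space) measure \<Rightarrow> 'a measure \<Rightarrow> ('a \<times> 'a) measure set" where
  "couplings \<mu> \<nu> = {\<pi>. prob_space \<pi> \<and> sets \<pi> = sets (borel :: ('a \<times> 'a) measure)
       \<and> distr \<pi> borel fst = \<mu> \<and> distr \<pi> borel snd = \<nu>}"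

definition wasserstein :: "real \<Rightarrow> ('a::euclidean_space) measure \<Rightarrow> 'a measure \<Rightarrow> ennreal" where
  "wasserstein p \<mu> \<nu> =
     (let I = (INF \<pi>\<in>couplings \<mu> \<nu>. \<integral>\<^sup>+ z. ennreal (dist (fst z) (snd z) powr p) \<partial>\<pi>)
      in if I = \<top> then \<top> else ennreal (enn2real I powr (1 / p)))"

definition mix_measure :: "real \<Rightarrow> ('a::euclidean_space) measure \<Rightarrow> 'a measure \<Rightarrow> 'a measure" where
  "mix_measure l m0 m1 = measure_of UNIV (sets borel)
     (\<lambda>A. ennreal (1 - l) * emeasure m0 A + ennreal l * emeasure m1 A)"

definition linear_derivative ::
  "(('a::euclidean_space) measure \<Rightarrow> real) \<Rightarrow> ('a measure \<Rightarrow> 'a \<Rightarrow> real) \<Rightarrow> bool" where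
  "linear_derivative F dF \<longleftrightarrow>
     (\<forall>m0\<in>prob_measures. \<forall>m1\<in>prob_measures.
        F m1 - F m0 = (\<integral>l\<in>{0..1}.
            (\<integral>x. dF (mix_measure l m0 m1) x \<partial>m1) - (\<integral>x. dF (mix_measure l m0 m1) x \<partial>m0) \<partial>lborel))"

definition standing_F ::
  "real \<Rightarrow> (('a::euclidean_space) measure \<Rightarrow> real) \<Rightarrow> ('a measure \<Rightarrow> 'a \<Rightarrow> real) \<Rightarrow> bool" where
  "standing_F p F dF \<longleftrightarrow>
     (\<forall>m\<in>prob_measures. F m \<ge> 0) \<and>
     linear_derivative F dF \<and>
     (\<exists>L>0. \<forall>m\<in>prob_measures. \<forall>m'\<in>prob_measures. \<forall>x x'.
        ennreal \<bar>dF m x - dF m' x'\<bar> \<le> ennreal L * (wasserstein p m m' + ennreal (dist x x'))) \<and>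
     (\<exists>M>0. \<forall>m\<in>prob_measures. \<forall>x. \<bar>dF m x\<bar> \<le> M)"

definition standing_U :: "real \<Rightarrow> (('a::euclidean_space) \<Rightarrow> real) \<Rightarrow> bool" where
  "standing_U p U \<longleftrightarrow>
     U \<in> borel_measurable borel \<and>
     (\<integral>\<^sup>+ x. ennreal (exp (- U x)) \<partial>lborel) = 1 \<and>
     (\<exists>b. AE x in lborel. b \<le> U x) \<and>
     Liminf at_infinity (\<lambda>x. ereal (U x / norm x powr p)) > 0"

definition gibbs_density ::
  "real \<Rightarrow> (('a::euclidean_space) measure \<Rightarrow> 'a \<Rightarrow> real) \<Rightarrow> ('a \<Rightarrow> real) \<Rightarrow> 'a measure \<Rightarrow> 'a \<Rightarrow> real" where
  "gibbs_density \<sigma> dF U m x =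
     exp (- 2 / \<sigma>\<^sup>2 * dF m x - U x) /
     (\<integral>y. exp (- 2 / \<sigma>\<^sup>2 * dF m y - U y) \<partial>lborel)"

definition Phi ::
  "real \<Rightarrow> (('a::euclidean_space) measure \<Rightarrow> 'a \<Rightarrow> real) \<Rightarrow> ('a \<Rightarrow> real) \<Rightarrow> 'a measure \<Rightarrow> 'a measure" where
  "Phi \<sigma> dF U m = density lborel (\<lambda>x. ennreal (gibbs_density \<sigma> dF U m x))"

fun dirder :: "('a::real_normed_vector) list \<Rightarrow> ('a \<Rightarrow> real) \<Rightarrow> 'a \<Rightarrow> real" where
  "dirder [] f = f"
| "dirder (v # vs) f = (\<lambda>x. deriv (\<lambda>t. dirder vs f (x + t *\<^sub>R v)) 0)"

definition smooth_fun :: "(('a::real_normed_vector) \<Rightarrow> real) \<Rightarrow> bool" where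
  "smooth_fun f \<longleftrightarrow>
     (\<forall>vs. continuous_on UNIV (dirder vs f) \<and>
        (\<forall>v x. (\<lambda>t. dirder vs f (x + t *\<^sub>R v)) differentiable (at 0)))"

definition test_fun :: "(('a::euclidean_space) \<Rightarrow> real) \<Rightarrow> bool" where
  "test_fun \<phi> \<longleftrightarrow> smooth_fun \<phi> \<and> compact (closure {x. \<phi> x \<noteq> 0})"

text \<open>\<open>m\<close> is a solution in \<open>C([0,\<infinity>); W_p)\<close> of \<open>dm_t/dt = \<alpha>(\<Phi>(m_t) - m_t)\<close>,
  \<open>m_0 = \<mu>0\<close>, in the sense of distributions (tested against \<open>C_c^\<infinity>\<close> functions,
  in time-integrated form).\<close>

definition efp_solution ::
  "real \<Rightarrow> real \<Rightarrow> real \<Rightarrow> (('a::euclidean_space) measure \<Rightarrow> 'a \<Rightarrow> real) \<Rightarrow> ('a \<Rightarrow> real)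
     \<Rightarrow> 'a measure \<Rightarrow> (real \<Rightarrow> 'a measure) \<Rightarrow> bool" where
  "efp_solution p \<sigma> \<alpha> dF U \<mu>0 m \<longleftrightarrow>
     (\<forall>t\<ge>0. m t \<in> p_moment_measures p) \<and>
     (\<forall>t\<ge>0. ((\<lambda>s. wasserstein p (m s) (m t)) \<longlongrightarrow> 0) (at t within {0..})) \<and>
     m 0 = \<mu>0 \<and>
     (\<forall>\<phi>. test_fun \<phi> \<longrightarrow> (\<forall>t\<ge>0.
        (\<integral>x. \<phi> x \<partial>m t) - (\<integral>x. \<phi> x \<partial>m 0) =
        (\<integral>s\<in>{0..t}. \<alpha> * ((\<integral>x. \<phi> x \<partial>Phi \<sigma> dF U (m s)) - (\<integral>x. \<phi> x \<partial>m s)) \<partial>lborel)))"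

end

theory Submission
  imports Defs
begin

lemma W_self:
  assumes "m \<in> prob_measures"
  shows "wasserstein p m m = 0"
proof -
  let ?\<pi> = "distr m (borel :: ('a::euclidean_space \<times> 'a) measure) (\<lambda>x. (x, x))"
  have sm: "sets m = sets borel" and ps: "prob_space m" using assms by (auto simp: prob_measures_def)
  have meas: "(\<lambda>x::'a. (x, x)) \<in> m \<rightarrow>\<^sub>M borel"
    using sm by (simp add: measurable_cong_sets[OF sm refl])
  have "?\<pi> \<in> couplings m m"
  proof -
    have "prob_space ?\<pi>" using ps meas by (simp add: prob_space.prob_space_distr)
    moreover have "distr ?\<pi> borel fst = m"
    proof -
      have "distr ?\<pi> borel fst = distr m borel (fst \<circ> (\<lambda>x. (x, x)))"
        by (rule distr_distr) (use meas in \<open>auto intro!: borel_measurable_continuous_onI continuous_intros\<close>)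
      also have "\<dots> = distr m borel (\<lambda>x. x)" by (simp add: comp_def)
      also have "\<dots> = m" using sm by (simp add: distr_id2)
      finally show ?thesis .
    qed
    moreover have "distr ?\<pi> borel snd = m"
    proof -
      have "distr ?\<pi> borel snd = distr m borel (snd \<circ> (\<lambda>x. (x, x)))"
        by (rule distr_distr) (use meas in \<open>auto intro!: borel_measurable_continuous_onI continuous_intros\<close>)
      also have "\<dots> = distr m borel (\<lambda>x. x)" by (simp add: comp_def)
      also have "\<dots> = m" using sm by (simp add: distr_id2)
      finally show ?thesis .
    qed
    ultimately show ?thesis by (simp add: couplings_def)
  qed
  moreover have "(\<integral>\<^sup>+ z. ennreal (dist (fst z) (snd z) powr p) \<partial>?\<pi>) = 0"
  proof -
    have "(\<integral>\<^sup>+ z. ennreal (dist (fst z) (snd z) powr p) \<partial>?\<pi>) = (\<integral>\<^sup>+ x. ennreal (dist (fst (x,x)) (snd (x,x)) powr p) \<partial>m)"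
    proof (rule nn_integral_distr[OF meas])
      have "(\<lambda>z::'a\<times>'a. ennreal (dist (fst z) (snd z) powr p)) \<in> borel_measurable borel"
      by (intro measurable_compose[OF _ measurable_ennreal] powr_real_measurable borel_measurable_continuous_onI continuous_intros measurable_const) auto
      then show "(\<lambda>z::'a\<times>'a. ennreal (dist (fst z) (snd z) powr p)) \<in> borel_measurable ?\<pi>"
        by (simp add: measurable_cong_sets[OF sets_distr refl])
    qed
    then show ?thesis by simp
  qed
  ultimately have "(INF \<pi>\<in>couplings m m. \<integral>\<^sup>+ z. ennreal (dist (fst z) (snd z) powr p) \<partial>\<pi>) = 0"
    by (metis (no_types, lifting) INF_lower bot.extremum_uniqueI bot_ennreal)
  then show ?thesis by (simp add: wasserstein_def)
qed


lemma exp_lip: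
  fixes a b c :: real
  assumes "a \<le> c" "b \<le> c"
  shows "\<bar>exp a - exp b\<bar> \<le> exp c * \<bar>a - b\<bar>"
proof -
  have key: "exp u - exp v \<le> exp c * (u - v)" if "v \<le> u" "u \<le> c" for u v :: real
  proof -
    have "1 + (v - u) \<le> exp (v - u)" by (rule exp_ge_add_one_self)
    hence "1 - exp (v - u) \<le> u - v" by linarith
    hence "exp u * (1 - exp (v - u)) \<le> exp u * (u - v)" by (simp add: mult_left_mono)
    also have "\<dots> \<le> exp c * (u - v)" using that by (intro mult_right_mono) auto
    finally show ?thesis by (simp add: algebra_simps exp_diff)
  qed
  show ?thesis
  proof (cases "b \<le> a")
    case True
    then show ?thesis using key[of b a] assms by (simp add: abs_if)
  next
    case False
    then show ?thesis using key[of a b] assms by (simp add: abs_if)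
  qed
qed

lemma tendsto_from_W:
  fixes g :: "'b \<Rightarrow> real" and Wf :: "'b \<Rightarrow> ennreal"
  assumes W0: "(Wf \<longlongrightarrow> 0) F" and ev: "eventually (\<lambda>s. ennreal \<bar>g s - g0\<bar> \<le> ennreal c * Wf s) F"
  shows "(g \<longlongrightarrow> g0) F"
proof -
  have "((\<lambda>s. ennreal c * Wf s) \<longlongrightarrow> ennreal c * 0) F"
    by (rule ennreal_tendsto_cmult[OF _ W0]) simp
  hence lim0: "((\<lambda>s. ennreal c * Wf s) \<longlongrightarrow> 0) F" by simp
  have ev0: "eventually (\<lambda>s. (0::ennreal) \<le> ennreal \<bar>g s - g0\<bar>) F" by simp
  have "((\<lambda>s. ennreal \<bar>g s - g0\<bar>) \<longlongrightarrow> 0) F"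
    by (rule tendsto_sandwich[OF ev0 ev tendsto_const lim0])
  hence "((\<lambda>s. ennreal \<bar>g s - g0\<bar>) \<longlongrightarrow> ennreal 0) F" by simp
  hence "((\<lambda>s. \<bar>g s - g0\<bar>) \<longlongrightarrow> 0) F"
    by (subst (asm) tendsto_ennreal_iff) auto
  hence "((\<lambda>s. g s - g0) \<longlongrightarrow> 0) F" by (simp add: tendsto_rabs_zero_iff)
  thus ?thesis by (simp add: LIM_zero_iff)
qed

locale setting =
  fixes p \<sigma> M L :: real and dF :: "('a::euclidean_space) measure \<Rightarrow> 'a \<Rightarrow> real" and U :: "'a \<Rightarrow> real"
  assumes sig: "\<sigma> > 0" and Mpos: "M > 0" and Lpos: "L > 0"
    and bnd: "\<forall>m\<in>prob_measures. \<forall>x. \<bar>dF m x\<bar> \<le> M"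
    and lip: "\<forall>m\<in>prob_measures. \<forall>m'\<in>prob_measures. \<forall>x x'.
        ennreal \<bar>dF m x - dF m' x'\<bar> \<le> ennreal L * (wasserstein p m m' + ennreal (dist x x'))"
    and Umeas: "U \<in> borel_measurable borel"
    and Uint: "(\<integral>\<^sup>+ x. ennreal (exp (- U x)) \<partial>lborel) = 1"
begin

definition K where "K = 2 / \<sigma>\<^sup>2 * M"

lemma K_pos: "K > 0" using sig Mpos by (simp add: K_def)

lemma dF_lip_x: assumes "m \<in> prob_measures" shows "\<bar>dF m x - dF m x'\<bar> \<le> L * dist x x'"
proof -
  have "ennreal \<bar>dF m x - dF m x'\<bar> \<le> ennreal L * (0 + ennreal (dist x x'))"
    using lip assms W_self[OF assms, of p] by metis
  also have "\<dots> = ennreal (L * dist x x')" using Lpos by (simp add: ennreal_mult)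
  finally show ?thesis using Lpos by (simp add: ennreal_le_iff)
qed

lemma dF_meas: assumes "m \<in> prob_measures" shows "dF m \<in> borel_measurable borel"
proof (rule borel_measurable_continuous_onI)
  have "L-lipschitz_on UNIV (dF m)"
    by (rule lipschitz_onI) (use dF_lip_x[OF assms] Lpos in \<open>auto simp: dist_real_def\<close>)
  thus "continuous_on UNIV (dF m)" by (rule lipschitz_on_continuous_on)
qed

lemma expU_int: "integrable lborel (\<lambda>y. exp (- U y))"
  by (rule integrableI_nn_integral_finite[where x=1]) (use Umeas Uint in auto)

lemma expU_integral: "(\<integral>y. exp (- U y) \<partial>lborel) = 1"
  by (subst integral_eq_nn_integral) (use Umeas Uint in auto)

lemma f_bounds:
  assumes "m \<in> prob_measures"
  shows "exp (- K) * exp (- U y) \<le> exp (- 2 / \<sigma>\<^sup>2 * dF m y - U y)"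
    "exp (- 2 / \<sigma>\<^sup>2 * dF m y - U y) \<le> exp K * exp (- U y)"
proof -
  have b: "\<bar>dF m y\<bar> \<le> M" using bnd assms by auto
  have k: "2 / \<sigma>\<^sup>2 > 0" using sig by simp
  have "\<bar>- 2 / \<sigma>\<^sup>2 * dF m y\<bar> \<le> K"
    using mult_left_mono[OF b less_imp_le[OF k]] by (simp add: K_def abs_mult)
  hence "- K \<le> - 2 / \<sigma>\<^sup>2 * dF m y" "- 2 / \<sigma>\<^sup>2 * dF m y \<le> K" by linarith+
  thus "exp (- K) * exp (- U y) \<le> exp (- 2 / \<sigma>\<^sup>2 * dF m y - U y)"
    "exp (- 2 / \<sigma>\<^sup>2 * dF m y - U y) \<le> exp K * exp (- U y)"
    by (simp_all add: exp_add[symmetric])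
qed

lemma f_int:
  assumes "m \<in> prob_measures"
  shows "integrable lborel (\<lambda>y. exp (- 2 / \<sigma>\<^sup>2 * dF m y - U y))"
proof (rule Bochner_Integration.integrable_bound[OF integrable_mult_right[OF expU_int, of "exp K"]])
  show "(\<lambda>y. exp (- 2 / \<sigma>\<^sup>2 * dF m y - U y)) \<in> borel_measurable lborel"
    using dF_meas[OF assms] Umeas by simp
  show "AE y in lborel. norm (exp (- 2 / \<sigma>\<^sup>2 * dF m y - U y)) \<le> norm (exp K * exp (- U y))"
  proof (intro AE_I2)
    fix y show "norm (exp (- 2 / \<sigma>\<^sup>2 * dF m y - U y)) \<le> norm (exp K * exp (- U y))"
      using f_bounds(2)[OF assms, of y] by simp
  qed
qed

definition Z where "Z m = (\<integral>y. exp (- 2 / \<sigma>\<^sup>2 * dF m y - U y) \<partial>lborel)"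

lemma Z_bounds:
  assumes "m \<in> prob_measures"
  shows "exp (- K) \<le> Z m" "Z m \<le> exp K"
proof -
  have "(\<integral>y. exp (- K) * exp (- U y) \<partial>lborel) \<le> Z m" unfolding Z_def
    by (rule integral_mono[OF integrable_mult_right[OF expU_int] f_int[OF assms]])
       (use f_bounds(1)[OF assms] in auto)
  thus "exp (- K) \<le> Z m" using expU_integral by simp
  have "Z m \<le> (\<integral>y. exp K * exp (- U y) \<partial>lborel)" unfolding Z_def
    by (rule integral_mono[OF f_int[OF assms] integrable_mult_right[OF expU_int]])
       (use f_bounds(2)[OF assms] in auto)
  thus "Z m \<le> exp K" using expU_integral by simp
qed

lemma gibbs_eq: "gibbs_density \<sigma> dF U m x = exp (- 2 / \<sigma>\<^sup>2 * dF m x - U x) / Z m"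
  by (simp add: gibbs_density_def Z_def)

lemma gibbs_bounds:
  assumes "m \<in> prob_measures"
  shows "exp (- 2 * K) * exp (- U x) \<le> gibbs_density \<sigma> dF U m x"
    "gibbs_density \<sigma> dF U m x \<le> exp (2 * K) * exp (- U x)"
proof -
  note Z = Z_bounds[OF assms] and f = f_bounds[OF assms, of x]
  have Zp: "Z m > 0" using Z(1) by (meson exp_gt_zero less_le_trans)
  have e1: "exp (- K - K) = exp (- K) / exp K" by (rule exp_diff)
  have "exp (- 2 * K) * exp (- U x) = exp (- K) * exp (- U x) / exp K"
  proof -
    have "- 2 * K = - K - K" by linarith
    hence e2: "exp (- 2 * K) = exp (- K) / exp K" using e1 by (simp only:)
    show ?thesis by (simp only: e2 times_divide_eq_left)
  qed
  also have "\<dots> \<le> exp (- 2 / \<sigma>\<^sup>2 * dF m x - U x) / Z m"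
    by (rule frac_le[OF _ f(1) Zp Z(2)]) simp
  finally show "exp (- 2 * K) * exp (- U x) \<le> gibbs_density \<sigma> dF U m x" by (simp add: gibbs_eq)
  have "exp (- 2 / \<sigma>\<^sup>2 * dF m x - U x) / Z m \<le> exp K * exp (- U x) / exp (- K)"
    by (rule frac_le[OF _ f(2) _ Z(1)]) simp_all
  also have "\<dots> = exp (2 * K) * exp (- U x)"
  proof -
    have e1: "exp (K - - K) = exp K / exp (- K)" by (rule exp_diff)
    have "2 * K = K - - K" by linarith
    hence e2: "exp (2 * K) = exp K / exp (- K)" using e1 by (simp only:)
    show ?thesis by (simp only: e2 times_divide_eq_left)
  qed
  finally show "gibbs_density \<sigma> dF U m x \<le> exp (2 * K) * exp (- U x)" by (simp add: gibbs_eq)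
qed


lemma dF_lip_m:
  assumes "m \<in> prob_measures" "m' \<in> prob_measures"
  shows "ennreal \<bar>dF m y - dF m' y\<bar> \<le> ennreal L * wasserstein p m m'"
  using lip assms by (metis add.right_neutral dist_self ennreal_0)

lemma f_arg: assumes "m \<in> prob_measures" shows "- 2 / \<sigma>\<^sup>2 * dF m y \<le> K"
proof -
  have b: "\<bar>dF m y\<bar> \<le> M" using bnd assms by auto
  have k: "2 / \<sigma>\<^sup>2 > 0" using sig by simp
  have "\<bar>- 2 / \<sigma>\<^sup>2 * dF m y\<bar> \<le> K"
    using mult_left_mono[OF b less_imp_le[OF k]] by (simp add: K_def abs_mult)
  thus ?thesis by linarith
qed

lemma Z_lip:
  assumes mm: "m \<in> prob_measures" "m' \<in> prob_measures"
  shows "ennreal \<bar>Z m - Z m'\<bar> \<le> ennreal (exp K * (2 / \<sigma>\<^sup>2) * L) * wasserstein p m m'"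
proof (cases "wasserstein p m m' = \<top>")
  case True
  have pos: "exp K * (2 / \<sigma>\<^sup>2) * L > 0" using sig Lpos by simp
  have "ennreal (exp K * (2 / \<sigma>\<^sup>2) * L) * wasserstein p m m' = \<top>"
    unfolding True using pos by (subst ennreal_mult_top) (simp only: ennreal_eq_0_iff not_le, simp)
  then show ?thesis by (simp only:) (rule top_greatest)
next
  case False
  then obtain w where w: "wasserstein p m m' = ennreal w" "0 \<le> w" by (cases "wasserstein p m m'") auto
  let ?k = "2 / \<sigma>\<^sup>2"
  have kpos: "?k > 0" using sig by simp
  have dl: "\<bar>dF m y - dF m' y\<bar> \<le> L * w" for y
  proof -
    have "ennreal \<bar>dF m y - dF m' y\<bar> \<le> ennreal (L * w)"
      using dF_lip_m[OF mm, of y] w Lpos by (simp add: ennreal_mult)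
    thus ?thesis using Lpos w by (simp add: ennreal_le_iff)
  qed
  have pb: "\<bar>exp (- 2 / \<sigma>\<^sup>2 * dF m y - U y) - exp (- 2 / \<sigma>\<^sup>2 * dF m' y - U y)\<bar> \<le> exp K * ?k * L * w * exp (- U y)" for y
  proof -
    have "\<bar>exp (- 2 / \<sigma>\<^sup>2 * dF m y - U y) - exp (- 2 / \<sigma>\<^sup>2 * dF m' y - U y)\<bar>
        \<le> exp (K - U y) * \<bar>(- 2 / \<sigma>\<^sup>2 * dF m y - U y) - (- 2 / \<sigma>\<^sup>2 * dF m' y - U y)\<bar>"
      by (rule exp_lip) (use f_arg[OF mm(1), of y] f_arg[OF mm(2), of y] in auto)
    also have "\<bar>(- 2 / \<sigma>\<^sup>2 * dF m y - U y) - (- 2 / \<sigma>\<^sup>2 * dF m' y - U y)\<bar> = ?k * \<bar>dF m y - dF m' y\<bar>"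
    proof -
      have "(- 2 / \<sigma>\<^sup>2 * dF m y - U y) - (- 2 / \<sigma>\<^sup>2 * dF m' y - U y) = ?k * (dF m' y - dF m y)"
        by (simp add: right_diff_distrib minus_divide_left[symmetric])
      thus ?thesis using kpos by (simp only: abs_mult abs_minus_commute[of "dF m' y"])
    qed
    also have "exp (K - U y) * (?k * \<bar>dF m y - dF m' y\<bar>) \<le> exp (K - U y) * (?k * (L * w))"
      using dl[of y] kpos by (intro mult_left_mono) auto
    also have "\<dots> = exp K * ?k * L * w * exp (- U y)"
    proof -
      have e: "exp (K - U y) = exp K * exp (- U y)" using exp_add[of K "- U y"] by simp
      show ?thesis unfolding e by (simp add: mult_ac)
    qed
    finally show ?thesis .
  qed
  have "\<bar>Z m - Z m'\<bar> = \<bar>\<integral>y. exp (- 2 / \<sigma>\<^sup>2 * dF m y - U y) - exp (- 2 / \<sigma>\<^sup>2 * dF m' y - U y) \<partial>lborel\<bar>"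
    unfolding Z_def by (subst Bochner_Integration.integral_diff[OF f_int[OF mm(1)] f_int[OF mm(2)]]) simp
  also have "\<dots> \<le> (\<integral>y. exp K * ?k * L * w * exp (- U y) \<partial>lborel)"
    by (rule integral_abs_bound_integral[OF Bochner_Integration.integrable_diff[OF f_int[OF mm(1)] f_int[OF mm(2)]]
          integrable_mult_right[OF expU_int]]) (use pb in simp)
  also have "\<dots> = exp K * ?k * L * w" using expU_integral by simp
  finally have "\<bar>Z m - Z m'\<bar> \<le> exp K * ?k * L * w" .
  hence "ennreal \<bar>Z m - Z m'\<bar> \<le> ennreal (exp K * ?k * L * w)" by (rule ennreal_leI)
  also have "\<dots> = ennreal (exp K * ?k * L) * ennreal w"
    using w kpos Lpos by (subst ennreal_mult[symmetric]) (auto simp: mult_ac)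
  finally show ?thesis using w by simp
qed


lemma gibbs_cont:
  assumes ms: "\<forall>s\<ge>0. m s \<in> prob_measures"
    and Wc: "\<forall>t\<ge>0. ((\<lambda>s. wasserstein p (m s) (m t)) \<longlongrightarrow> 0) (at t within {0..})"
    and "t \<ge> 0"
  shows "continuous_on {0..t} (\<lambda>s. gibbs_density \<sigma> dF U (m s) x)"
  unfolding continuous_on_def
proof
  fix s0 assume s0: "s0 \<in> {0..t}"
  let ?F = "at s0 within {0..t}"
  have W0: "((\<lambda>s. wasserstein p (m s) (m s0)) \<longlongrightarrow> 0) ?F"
    by (rule tendsto_within_subset[OF Wc[rule_format]]) (use s0 in auto)
  have evin: "eventually (\<lambda>s. s \<in> {0..t}) ?F" by (simp add: eventually_at_filter)
  have ms0: "m s0 \<in> prob_measures" using ms s0 by auto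
  have dFl: "((\<lambda>s. dF (m s) x) \<longlongrightarrow> dF (m s0) x) ?F"
    by (rule tendsto_from_W[OF W0, where c = L], rule eventually_mono[OF evin])
       (use ms ms0 dF_lip_m in auto)
  have Zl: "((\<lambda>s. Z (m s)) \<longlongrightarrow> Z (m s0)) ?F"
    by (rule tendsto_from_W[OF W0, where c = "exp K * (2 / \<sigma>\<^sup>2) * L"], rule eventually_mono[OF evin])
       (use ms ms0 Z_lip in auto)
  have Zn: "Z (m s0) \<noteq> 0" using Z_bounds(1)[OF ms0] by (metis exp_gt_zero not_le order_less_le)
  have "((\<lambda>s. exp (- 2 / \<sigma>\<^sup>2 * dF (m s) x - U x) / Z (m s)) \<longlongrightarrow>
        exp (- 2 / \<sigma>\<^sup>2 * dF (m s0) x - U x) / Z (m s0)) ?F"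
    by (intro tendsto_intros dFl Zl Zn)
  thus "((\<lambda>s. gibbs_density \<sigma> dF U (m s) x) \<longlongrightarrow> gibbs_density \<sigma> dF U (m s0) x) ?F"
    by (simp add: gibbs_eq)
qed

end

lemma exp_kernel_integral:
  fixes \<alpha> t :: real
  assumes "t \<ge> 0"
  shows "((\<lambda>s. \<alpha> * exp (- \<alpha> * (t - s))) has_integral (1 - exp (- \<alpha> * t))) {0..t}"
proof -
  have "((\<lambda>s. \<alpha> * exp (- \<alpha> * (t - s))) has_integral (exp (- \<alpha> * (t - t)) - exp (- \<alpha> * (t - 0)))) {0..t}"
  proof (rule fundamental_theorem_of_calculus[OF assms])
    fix s assume "s \<in> {0..t}"
    have "((\<lambda>s. exp (- \<alpha> * (t - s))) has_real_derivative exp (- \<alpha> * (t - s)) * (- \<alpha> * (0 - 1))) (at s within {0..t})"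
      by (auto intro!: derivative_eq_intros)
    thus "((\<lambda>s. exp (- \<alpha> * (t - s))) has_vector_derivative \<alpha> * exp (- \<alpha> * (t - s))) (at s within {0..t})"
      by (simp add: has_real_derivative_iff_has_vector_derivative mult.commute)
  qed
  thus ?thesis by simp
qed

theorem corollary18:
  fixes p \<sigma> :: real
    and F :: "('a::euclidean_space) measure \<Rightarrow> real"
    and dF :: "'a measure \<Rightarrow> 'a \<Rightarrow> real"
    and U :: "'a \<Rightarrow> real"
  assumes "p \<ge> 1" and "\<sigma> > 0"
    and "standing_F p F dF"
    and "standing_U p U"
  shows "\<exists>c>0. \<exists>C>0. \<forall>(\<alpha>::real) (m0 :: 'a \<Rightarrow> real) (m :: real \<Rightarrow> 'a measure).
           \<alpha> > 0 \<longrightarrow>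
           m0 \<in> borel_measurable borel \<longrightarrow> (\<forall>x. m0 x \<ge> 0) \<longrightarrow>
           density lborel (\<lambda>x. ennreal (m0 x)) \<in> p_moment_measures p \<longrightarrow>
           efp_solution p \<sigma> \<alpha> dF U (density lborel (\<lambda>x. ennreal (m0 x))) m \<longrightarrow>
           (\<forall>t\<ge>0. \<forall>x.
              let mt = integral {0..t} (\<lambda>s. \<alpha> * exp (- \<alpha> * (t - s)) * gibbs_density \<sigma> dF U (m s) x)
                       + exp (- \<alpha> * t) * m0 x
              in (1 - exp (- \<alpha> * t)) * c * exp (- U x) \<le> mt \<and>
                 mt \<le> (1 - exp (- \<alpha> * t)) * C * exp (- U x) + exp (- \<alpha> * t) * m0 x)"
proof -
  obtain L where Lpos: "L > 0" and lip: "\<forall>m\<in>prob_measures. \<forall>m'\<in>prob_measures. \<forall>x x'.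
        ennreal \<bar>dF m x - dF m' x'\<bar> \<le> ennreal L * (wasserstein p m m' + ennreal (dist x x'))"
    using assms(3) unfolding standing_F_def by blast
  obtain M where Mpos: "M > 0" and bnd: "\<forall>m\<in>prob_measures. \<forall>x. \<bar>dF m x\<bar> \<le> M"
    using assms(3) unfolding standing_F_def by blast
  have Umeas: "U \<in> borel_measurable borel" and Uint: "(\<integral>\<^sup>+ x. ennreal (exp (- U x)) \<partial>lborel) = 1"
    using assms(4) unfolding standing_U_def by auto
  interpret S: setting p \<sigma> M L dF U
    by unfold_locales (use assms(2) Mpos Lpos bnd lip Umeas Uint in auto)
  show ?thesis
  proof (rule exI[of _ "exp (- 2 * S.K)"], rule conjI, simp, rule exI[of _ "exp (2 * S.K)"], rule conjI, simp,
         intro allI impI)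
    fix \<alpha> :: real and m0 :: "'a \<Rightarrow> real" and m :: "real \<Rightarrow> 'a measure" and t :: real and x :: 'a
    assume \<alpha>: "\<alpha> > 0" and "m0 \<in> borel_measurable borel" and m0nn: "\<forall>x. m0 x \<ge> 0"
      and "density lborel (\<lambda>x. ennreal (m0 x)) \<in> p_moment_measures p"
      and efp: "efp_solution p \<sigma> \<alpha> dF U (density lborel (\<lambda>x. ennreal (m0 x))) m"
      and t: "t \<ge> 0"
    have ms: "\<forall>s\<ge>0. m s \<in> prob_measures"
      using efp unfolding efp_solution_def p_moment_measures_def by auto
    have Wc: "\<forall>t\<ge>0. ((\<lambda>s. wasserstein p (m s) (m t)) \<longlongrightarrow> 0) (at t within {0..})"
      using efp unfolding efp_solution_def by auto
      let ?G = "\<lambda>s. gibbs_density \<sigma> dF U (m s) x"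
      let ?h = "\<lambda>s. \<alpha> * exp (- \<alpha> * (t - s)) * ?G s"
      have "continuous_on {0..t} ?h"
        by (intro continuous_intros S.gibbs_cont[OF ms Wc t])
      hence hint: "(?h has_integral integral {0..t} ?h) {0..t}"
        by (intro integrable_integral integrable_continuous_interval)
      have E: "((\<lambda>s. \<alpha> * exp (- \<alpha> * (t - s))) has_integral (1 - exp (- \<alpha> * t))) {0..t}"
        by (rule exp_kernel_integral[OF t])
      have lo: "(1 - exp (- \<alpha> * t)) * (exp (- 2 * S.K) * exp (- U x)) \<le> integral {0..t} ?h"
      proof (rule has_integral_le[OF has_integral_mult_left[OF E] hint])
        fix s assume "s \<in> {0..t}"
        hence "m s \<in> prob_measures" using ms by auto
        thus "\<alpha> * exp (- \<alpha> * (t - s)) * (exp (- 2 * S.K) * exp (- U x)) \<le> ?h s"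
          using S.gibbs_bounds(1) \<alpha> by (intro mult_left_mono) auto
      qed
      have hi: "integral {0..t} ?h \<le> (1 - exp (- \<alpha> * t)) * (exp (2 * S.K) * exp (- U x))"
      proof (rule has_integral_le[OF hint has_integral_mult_left[OF E]])
        fix s assume "s \<in> {0..t}"
        hence "m s \<in> prob_measures" using ms by auto
        thus "?h s \<le> \<alpha> * exp (- \<alpha> * (t - s)) * (exp (2 * S.K) * exp (- U x))"
          using S.gibbs_bounds(2) \<alpha> by (intro mult_left_mono) auto
      qed
      have "0 \<le> exp (- \<alpha> * t) * m0 x" using m0nn by simp
      thus "let mt = integral {0..t} ?h + exp (- \<alpha> * t) * m0 x
              in (1 - exp (- \<alpha> * t)) * exp (- 2 * S.K) * exp (- U x) \<le> mt \<and>
                 mt \<le> (1 - exp (- \<alpha> * t)) * exp (2 * S.K) * exp (- U x) + exp (- \<alpha> * t) * m0 x"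
        using lo hi by (simp add: Let_def mult.assoc)
  qed
qed

end
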